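(* Let $X$ be a complex Banach space and $T:X\to X$ a bounded linear operator which is an $m$-isometry and is recurrent. Then $T$ is a surjective isometry.
   Context: For $m\in\mathbb N$ and $p\in[1,\infty)$, $T$ is an $(m,p)$-isometry if $\sum_{k=0}^m(-1)^{m-k}\binom mk\|T^kx\|^p=0$ for every $x\in X$; $T$ is an $m$-isometry if it is an $(m,p)$-isometry for some $p\in[1,\infty)$. $T$ is recurrent if for every non-empty open $U\subset X$ there is a positive integer $k$ with $U\cap T^{-k}(U)\neq\emptyset$. *)

theory Defs
  imports "HOL-Analysis.Analysis"
begin

text \<open>A complex Banach space is
  rendered as a real Banach space together with a complex structure J
  (multiplication by the imaginary unit): complex scalar multiplication is
  c x = Re c x + Im c (J x), and the norm must be absolutely homogeneous for it.\<close>

definition complex_structure :: "('a::real_normed_vector \<Rightarrow> 'a) \<Rightarrow> bool" where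
  "complex_structure J \<longleftrightarrow> linear J \<and> (\<forall>x. J (J x) = - x) \<and>
     (\<forall>a b x. norm (a *\<^sub>R x + b *\<^sub>R J x) = cmod (Complex a b) * norm x)"

definition bounded_complex_linear ::
    "('a::real_normed_vector \<Rightarrow> 'a) \<Rightarrow> ('a \<Rightarrow> 'a) \<Rightarrow> bool" where
  "bounded_complex_linear J T \<longleftrightarrow> bounded_linear T \<and> (\<forall>x. T (J x) = J (T x))"

definition mp_isometry :: "nat \<Rightarrow> real \<Rightarrow> ('a::real_normed_vector \<Rightarrow> 'a) \<Rightarrow> bool" where
  "mp_isometry m p T \<longleftrightarrow>
     (\<forall>x. (\<Sum>k\<le>m. (-1) ^ (m - k) * real (m choose k) * norm ((T ^^ k) x) powr p) = 0)"

definition m_isometry :: "nat \<Rightarrow> ('a::real_normed_vector \<Rightarrow> 'a) \<Rightarrow> bool" where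
  "m_isometry m T \<longleftrightarrow> (\<exists>p. 1 \<le> p \<and> mp_isometry m p T)"

definition recurrent :: "('a::topological_space \<Rightarrow> 'a) \<Rightarrow> bool" where
  "recurrent T \<longleftrightarrow>
     (\<forall>U. open U \<and> U \<noteq> {} \<longrightarrow> (\<exists>k>0. U \<inter> (T ^^ k) -` U \<noteq> {}))"

end

theory Submission
  imports Defs
begin

fun dif :: "nat \<Rightarrow> (nat \<Rightarrow> real) \<Rightarrow> nat \<Rightarrow> real" where
  "dif 0 a n = a n"
| "dif (Suc j) a n = dif j a (Suc n) - dif j a n"

lemma dif_formula:
  "dif j a n = (\<Sum>k\<le>j. (-1) ^ (j - k) * real (j choose k) * a (n + k))"
proof (induction j arbitrary: n)
  case 0
  then show ?case by simp
next
  case (Suc j)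
  have A: "(\<Sum>k\<le>j. (-1) ^ (j - k) * real (j choose k) * a (Suc n + k))
        = (\<Sum>k\<le>Suc j. (-1) ^ (Suc j - k) * real (j choose (k - 1)) * a (n + k) * (if k = 0 then 0 else 1))"
  proof -
    have "(\<Sum>k\<le>Suc j. (-1) ^ (Suc j - k) * real (j choose (k - 1)) * a (n + k) * (if k = 0 then 0 else 1))
        = (\<Sum>k\<le>j. (-1) ^ (Suc j - Suc k) * real (j choose k) * a (n + Suc k))"
      by (subst sum.atMost_Suc_shift) simp
    also have "\<dots> = (\<Sum>k\<le>j. (-1) ^ (j - k) * real (j choose k) * a (Suc n + k))"
      by simp
    finally show ?thesis by simp
  qed
  have B: "(\<Sum>k\<le>j. (-1) ^ (j - k) * real (j choose k) * a (n + k))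
        = (\<Sum>k\<le>Suc j. (-1) ^ (Suc j - k) * real (j choose k) * a (n + k) * (-1))"
  proof -
    have "(\<Sum>k\<le>Suc j. (-1) ^ (Suc j - k) * real (j choose k) * a (n + k) * (-1))
        = (\<Sum>k\<le>j. (-1) ^ (Suc j - k) * real (j choose k) * a (n + k) * (-1))"
      by simp
    also have "\<dots> = (\<Sum>k\<le>j. (-1) ^ (j - k) * real (j choose k) * a (n + k))"
      by (intro sum.cong refl) (simp add: Suc_diff_le)
    finally show ?thesis by simp
  qed
  have "dif (Suc j) a n = (\<Sum>k\<le>Suc j. (-1) ^ (Suc j - k) * real (j choose (k - 1)) * a (n + k) * (if k = 0 then 0 else 1))
        - (\<Sum>k\<le>Suc j. (-1) ^ (Suc j - k) * real (j choose k) * a (n + k) * (-1))"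
    by (simp only: dif.simps Suc.IH A B)
  also have "\<dots> = (\<Sum>k\<le>Suc j. (-1) ^ (Suc j - k) * real (Suc j choose k) * a (n + k))"
    unfolding sum_subtractf[symmetric]
  proof (intro sum.cong refl)
    fix k assume "k \<in> {..Suc j}"
    show "(-1) ^ (Suc j - k) * real (j choose (k - 1)) * a (n + k) * (if k = 0 then 0 else 1) -
          (-1) ^ (Suc j - k) * real (j choose k) * a (n + k) * (-1)
          = (-1) ^ (Suc j - k) * real (Suc j choose k) * a (n + k)"
    proof (cases k)
      case 0 then show ?thesis by simp
    next
      case (Suc i) then show ?thesis by (simp add: algebra_simps)
    qed
  qed
  finally show ?case .
qed

lemma dif_shift: "dif j a (n + i) = dif j (\<lambda>k. a (k + i)) n"
proof (induction j arbitrary: n)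
  case (Suc j)
  show ?case using Suc.IH[of "Suc n"] Suc.IH[of n] by simp
qed simp

lemma dif_zero_up: "(\<forall>n. dif j a n = 0) \<Longrightarrow> dif (j + i) a n = 0"
  by (induction i arbitrary: n) auto

lemma dif_linear:
  assumes "\<forall>i. dif (Suc (Suc e)) b i = 0"
  shows "dif e b k = dif e b 0 + real k * dif (Suc e) b 0"
proof -
  have const: "dif (Suc e) b i = dif (Suc e) b 0" for i
  proof (induction i)
    case (Suc i)
    have "dif (Suc (Suc e)) b i = 0" using assms by blast
    then show ?case using Suc by simp
  qed simp
  show ?thesis
  proof (induction k)
    case (Suc k)
    have "dif e b (Suc k) = dif e b k + dif (Suc e) b k" by simp
    then show ?case using Suc const[of k] by (simp add: algebra_simps)
  qed simp
qed


lemma funpow_continuous: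
  fixes T :: "'a::real_normed_vector \<Rightarrow> 'a"
  assumes "bounded_linear T"
  shows "continuous_on UNIV (T ^^ i)"
proof (induction i)
  case 0 then show ?case by (simp add: continuous_on_id)
next
  case (Suc i)
  have "continuous_on UNIV T"
    using assms linear_continuous_on by blast
  then have "continuous_on UNIV (T \<circ> (T ^^ i))"
    by (rule continuous_on_compose[OF Suc.IH continuous_on_subset]) auto
  then show ?case by simp
qed

theorem proposition8p5:
  fixes J T :: "'a::banach \<Rightarrow> 'a" and m :: nat
  assumes "complex_structure J"
    and "bounded_complex_linear J T"
    and "m_isometry m T"
    and "recurrent T"
  shows "surj T \<and> (\<forall>x. norm (T x) = norm x)"
proof -
  obtain p where p1: "1 \<le> p" and mp: "mp_isometry m p T"
    using assms(3) unfolding m_isometry_def by blast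
  have bl: "bounded_linear T" using assms(2) unfolding bounded_complex_linear_def by blast
  have rec: "\<And>U. open U \<Longrightarrow> U \<noteq> {} \<Longrightarrow> \<exists>k>0. \<exists>y. y \<in> U \<and> (T ^^ k) y \<in> U"
  proof -
    fix U :: "'a set" assume "open U" "U \<noteq> {}"
    then obtain k where "k > 0" "U \<inter> (T ^^ k) -` U \<noteq> {}"
      using assms(4) unfolding recurrent_def by meson
    then show "\<exists>k>0. \<exists>y. y \<in> U \<and> (T ^^ k) y \<in> U" by auto
  qed
  define a where "a y = (\<lambda>n. norm ((T ^^ n) y) powr p)" for y
  have aT: "a ((T ^^ i) y) = (\<lambda>k. a y (k + i))" for i y
    by (rule ext) (simp add: a_def funpow_add)
  have difT: "dif j (a ((T ^^ i) y)) n = dif j (a y) (n + i)" for j i y n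
    unfolding aT by (rule dif_shift[symmetric])
  have m0: "dif m (a y) 0 = 0" for y
    using mp unfolding mp_isometry_def dif_formula a_def by simp
  have mall: "dif m (a y) n = 0" for y n
    using difT[of m n y 0] m0[of "(T ^^ n) y"] by (simp only: add_0)
  define P where "P j \<longleftrightarrow> (\<forall>y n. dif j (a y) n = 0)" for j
  have Pge: "P j" if "m \<le> j" for j
  proof -
    have j: "j = m + (j - m)" using that by simp
    have "dif (m + (j - m)) (a y) n = 0" for y n
      by (rule dif_zero_up) (simp add: mall)
    then show ?thesis unfolding P_def using j by simp
  qed
  have cont: "continuous_on UNIV (\<lambda>y. dif j (a y) 0)" for j
  proof -
    have c1: "continuous_on UNIV (\<lambda>y. norm ((T ^^ i) y) powr p)" for i
      using funpow_continuous[OF bl, of i] p1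
      by (intro continuous_on_powr' continuous_intros) auto
    show ?thesis unfolding dif_formula a_def
      by (intro continuous_intros c1)
  qed
  have step: "P d" if d1: "1 \<le> d" and PS: "P (Suc d)" for d
  proof (rule ccontr)
    assume "\<not> P d"
    then obtain y0 n0 where ne: "dif d (a y0) n0 \<noteq> 0" unfolding P_def by blast
    define D where "D j y = dif j (a y) 0" for j y
    define x0 where "x0 = (T ^^ n0) y0"
    have ne0: "D d x0 \<noteq> 0" using ne difT[of d n0 y0 0] unfolding D_def x0_def by simp
    define c where "c = \<bar>D d x0\<bar>"
    have c0: "c > 0" using ne0 c_def by simp
    obtain e where de: "d = Suc e" using d1 by (cases d) auto
    define U where "U = {y. \<bar>D d y - D d x0\<bar> < c / 2} \<inter> {y. \<bar>D e y - D e x0\<bar> < c / 4}"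
    have cD: "continuous_on UNIV (D j)" for j
      using cont[of j] unfolding D_def by simp
    have "open U" unfolding U_def
      by (intro open_Int open_Collect_less continuous_intros cD)
    moreover have "x0 \<in> U" unfolding U_def using c0 by simp
    ultimately obtain k y where k: "k > 0" and yU: "y \<in> U" and kU: "(T ^^ k) y \<in> U"
      using rec by blast
    have lin: "dif e (a y) k = dif e (a y) 0 + real k * dif (Suc e) (a y) 0"
      by (rule dif_linear) (use PS de in \<open>simp add: P_def\<close>)
    have "D e ((T ^^ k) y) = dif e (a y) k" unfolding D_def using difT[of e k y 0] by simp
    then have eq: "D e ((T ^^ k) y) - D e y = real k * D d y"
      using lin de unfolding D_def by simp
    have "\<bar>D e ((T ^^ k) y) - D e y\<bar> < c / 2"
    proof -
      have "\<bar>D e y - D e x0\<bar> < c / 4" "\<bar>D e ((T ^^ k) y) - D e x0\<bar> < c / 4"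
        using yU kU unfolding U_def by auto
      then show ?thesis by linarith
    qed
    moreover have "\<bar>D d y\<bar> > c / 2"
    proof -
      have "\<bar>D d y - D d x0\<bar> < c / 2" using yU unfolding U_def by auto
      then show ?thesis unfolding c_def by linarith
    qed
    moreover have "\<bar>real k * D d y\<bar> \<ge> \<bar>D d y\<bar>"
      using k by (simp add: abs_mult mult_le_cancel_right1)
    ultimately show False using eq by linarith
  qed
  have down: "\<forall>j. m - i \<le> j \<longrightarrow> 1 \<le> j \<longrightarrow> P j" for i
  proof (induction i)
    case 0 then show ?case using Pge by simp
  next
    case (Suc i)
    show ?case
    proof (intro allI impI)
      fix j assume j: "m - Suc i \<le> j" "1 \<le> j"
      show "P j"
      proof (cases "m - i \<le> j")
        case True then show ?thesis using Suc j by blast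
      next
        case False
        then have "m - i \<le> Suc j" using j by linarith
        then have "P (Suc j)" using Suc by simp
        then show ?thesis using step j by blast
      qed
    qed
  qed
  have "P 1" using down[of m] by simp
  have iso: "norm (T x) = norm x" for x
  proof -
    have "dif 1 (a x) 0 = 0" using \<open>P 1\<close> unfolding P_def by blast
    then have e: "norm (T x) powr p = norm x powr p" by (simp add: a_def)
    have "(norm (T x) powr p) powr (1 / p) = (norm x powr p) powr (1 / p)" using e by simp
    then show ?thesis using p1 by (simp add: powr_powr)
  qed
  have "complete (T ` UNIV)"
    by (rule complete_isometric_image[of 1]) (auto simp: iso bl complete_UNIV subspace_UNIV)
  then have cl: "closed (range T)" by (rule complete_imp_closed)
  have "surj T"
  proof (rule ccontr)
    assume "\<not> surj T"
    then obtain x where x: "x \<notin> range T" by blast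
    define \<delta> where "\<delta> = infdist x (range T)"
    have "\<delta> \<noteq> 0" using in_closed_iff_infdist_zero[OF cl, of x] x \<delta>_def by auto
    then have \<delta>0: "\<delta> > 0" using infdist_nonneg[of x "range T"] \<delta>_def by simp
    obtain k y where k: "k > 0" and yU: "y \<in> ball x (\<delta>/2)" and kU: "(T ^^ k) y \<in> ball x (\<delta>/2)"
      using rec[of "ball x (\<delta>/2)"] \<delta>0 by auto
    have "(T ^^ k) y = T ((T ^^ (k - 1)) y)"
      using k by (cases k) auto
    then have "(T ^^ k) y \<in> range T" by simp
    then have "\<delta> \<le> dist x ((T ^^ k) y)" unfolding \<delta>_def by (rule infdist_le)
    then show False using kU \<delta>0 by simp
  qed
  then show ?thesis using iso by blast
qed

end
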